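(* Let $Z\in\{0,1\}^{n\times k}$ have exactly one $1$ in each row and at least one $1$ in each column, let $B\in[0,1]^{k\times k}$ be symmetric and full rank, and let $\mathscr{W}=ZBZ^T$. Let $\mathscr{D}$ be the diagonal matrix with $\mathscr{D}_{ii}=\sum_k\mathscr{W}_{ik}$ and $\mathscr{L}=\mathscr{D}^{-1/2}\mathscr{W}\mathscr{D}^{-1/2}$. Then there exists a matrix $\mu\in\mathbb{R}^{k\times k}$ such that the columns of $Z\mu$ are the eigenvectors of $\mathscr{L}$ corresponding to the nonzero eigenvalues of $\mathscr{L}$. Further, for all $i,j$, \[ z_i\mu=z_j\mu\iff z_i=z_j, \] where $z_i$ denotes the $i$th row of $Z$.
   Context: This is the population version of the Stochastic Blockmodel with $k$ blocks: $Z_{ig}=1$ means node $i$ belongs to block $g$, and $B$ contains the within- and between-block edge probabilities. *)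

theory Defs
  imports "HOL-Analysis.Analysis"
begin

definition sbm_W :: "real^'k^'n \<Rightarrow> real^'k^'k \<Rightarrow> real^'n^'n" where
  "sbm_W Z B = Z ** B ** transpose Z"

definition sbm_D :: "real^'k^'n \<Rightarrow> real^'k^'k \<Rightarrow> real^'n^'n" where
  "sbm_D Z B = (\<chi> i j. if i = j then (\<Sum>l\<in>UNIV. sbm_W Z B $ i $ l) else 0)"

definition sbm_D_inv_sqrt :: "real^'k^'n \<Rightarrow> real^'k^'k \<Rightarrow> real^'n^'n" where
  "sbm_D_inv_sqrt Z B = (\<chi> i j. if i = j then inverse (sqrt (sbm_D Z B $ i $ i)) else 0)"

definition sbm_L :: "real^'k^'n \<Rightarrow> real^'k^'k \<Rightarrow> real^'n^'n" where
  "sbm_L Z B = sbm_D_inv_sqrt Z B ** sbm_W Z B ** sbm_D_inv_sqrt Z B"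

definition is_eigenvector :: "real^'n^'n \<Rightarrow> real^'n \<Rightarrow> real \<Rightarrow> bool" where
  "is_eigenvector A v lam \<longleftrightarrow> v \<noteq> 0 \<and> A *v v = lam *\<^sub>R v"

end

theory Submission
  imports Defs
begin

lemma sym_inner:
  fixes A :: "real^'n^'n"
  assumes "transpose A = A"
  shows "(A *v x) \<bullet> y = x \<bullet> (A *v y)"
proof -
  have "(A *v x) \<bullet> y = (x v* transpose A) \<bullet> y" by simp
  also have "\<dots> = x \<bullet> (A *v y)" using assms by (simp only: dot_lmul_matrix)
  finally show ?thesis .
qed

lemma quad_nonpos:
  fixes a c :: real
  assumes "\<forall>t. 2*t*a + t*t*c \<le> 0" "a \<ge> 0"
  shows "a = 0"
proof (cases "c \<ge> 0")
  case True
  then show ?thesis using assms(1)[rule_format, of 1] assms(2) by simp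
next
  case False
  have "2*(a/(-c))*a + (a/(-c))*(a/(-c))*c \<le> 0" using assms(1) by blast
  moreover have "2*(a/(-c))*a + (a/(-c))*(a/(-c))*c = a*a/(-c)" using False
    by (simp add: field_simps power2_eq_square)
  ultimately have "a*a/(-c) \<le> 0" by simp
  moreover have "0 \<le> a*a/(-c)" using False by (intro divide_nonneg_pos) auto
  ultimately have "a*a/(-c) = 0" by linarith
  hence "a * a = 0" using False by simp
  thus ?thesis by simp
qed

lemma eig_exists:
  fixes A :: "real^'n^'n"
  assumes sym: "transpose A = A" and S: "subspace S" and inv: "\<forall>x\<in>S. A *v x \<in> S"
    and ne: "S \<noteq> {0}"
  shows "\<exists>u\<in>S. norm u = 1 \<and> (\<exists>c. A *v u = c *\<^sub>R u)"
proof -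
  let ?K = "S \<inter> sphere 0 1"
  let ?q = "\<lambda>x. x \<bullet> (A *v x)"
  have cK: "compact ?K" using compact_Int_closed[OF compact_sphere closed_subspace[OF S], of 0 1] by (simp add: Int_commute)
  obtain x where x: "x \<in> S" "x \<noteq> 0" using ne S subspace_0 by blast
  have "x /\<^sub>R norm x \<in> ?K" using x S by (simp add: subspace_scale)
  hence neK: "?K \<noteq> {}" by blast
  have "continuous_on ?K ?q"
    by (intro continuous_intros continuous_on_inner continuous_on_id linear_continuous_on) (auto simp: matrix_vector_mul_linear bounded_linear_def linear_linear)
  then obtain u where u: "u \<in> ?K" "\<forall>y\<in>?K. ?q y \<le> ?q u"
    using continuous_attains_sup[OF cK neK] by blast
  define M where "M = ?q u"
  have uS: "u \<in> S" and nu: "norm u = 1" using u by auto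
  have uu: "u \<bullet> u = 1" using nu by (simp add: dot_square_norm)
  have bound: "?q y \<le> M * (y \<bullet> y)" if yS: "y \<in> S" for y
  proof (cases "y = 0")
    case True then show ?thesis by simp
  next
    case False
    define w where "w = y /\<^sub>R norm y"
    have "w \<in> ?K" using yS False S by (simp add: w_def subspace_scale)
    hence "?q w \<le> M" using u M_def by auto
    moreover have "?q w = ?q y / (norm y)^2"
      by (simp add: w_def matrix_vector_mult_scaleR power2_eq_square field_simps)
    moreover have "y \<bullet> y = (norm y)^2" by (simp add: power2_norm_eq_inner)
    ultimately show ?thesis using False
      by (simp add: divide_le_eq)
  qed
  define r where "r = A *v u - M *\<^sub>R u"
  have rS: "r \<in> S" using S inv uS by (simp add: r_def subspace_diff subspace_scale)
  have key: "\<forall>t. 2*t*(r \<bullet> r) + t*t*(?q r - M * (r \<bullet> r)) \<le> 0"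
  proof
    fix t :: real
    have inS: "u + t *\<^sub>R r \<in> S" using S uS rS by (simp add: subspace_add subspace_scale)
    have e1: "?q (u + t *\<^sub>R r) = M + 2*t*(r \<bullet> (A *v u)) + t*t*?q r"
    proof -
      have "u \<bullet> (A *v r) = r \<bullet> (A *v u)" using sym_inner[OF sym, of r u] by (simp add: inner_commute)
      thus ?thesis by (simp add: M_def matrix_vector_right_distrib matrix_vector_mult_scaleR inner_add_left inner_add_right algebra_simps)
    qed
    have e2: "(u + t *\<^sub>R r) \<bullet> (u + t *\<^sub>R r) = 1 + 2*t*(r \<bullet> u) + t*t*(r \<bullet> r)"
      using uu by (simp add: inner_add_left inner_add_right inner_commute algebra_simps)
    have "r \<bullet> (A *v u) - M * (r \<bullet> u) = r \<bullet> r"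
      by (simp add: r_def inner_diff_right algebra_simps)
    hence h: "r \<bullet> (A *v u) = r \<bullet> r + M * (r \<bullet> u)" by simp
    have b: "M + 2*t*(r \<bullet> (A *v u)) + t*t*?q r \<le> M * (1 + 2*t*(r \<bullet> u) + t*t*(r \<bullet> r))"
      using bound[OF inS] unfolding e1 e2 .
    show "2*t*(r \<bullet> r) + t*t*(?q r - M * (r \<bullet> r)) \<le> 0"
      using b unfolding h by (simp add: algebra_simps)
  qed
  have "r \<bullet> r = 0" using quad_nonpos[OF key] by simp
  hence "r = 0" by simp
  hence "A *v u = M *\<^sub>R u" by (simp add: r_def)
  thus ?thesis using uS nu by blast
qed

lemma spectral:
  fixes A :: "real^'n^'n"
  assumes sym: "transpose A = A"
  shows "subspace S \<Longrightarrow> (\<forall>x\<in>S. A *v x \<in> S) \<Longrightarrow>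
    \<exists>E. E \<subseteq> S \<and> span E = S \<and> pairwise orthogonal E \<and> (\<forall>e\<in>E. norm e = 1 \<and> (\<exists>c. A *v e = c *\<^sub>R e))"
proof (induction "dim S" arbitrary: S rule: less_induct)
  case less
  show ?case
  proof (cases "S = {0}")
    case True
    then show ?thesis by (intro exI[of _ "{}"]) auto
  next
    case False
    obtain u c where uS: "u \<in> S" and nu: "norm u = 1" and uc: "A *v u = c *\<^sub>R u"
      using eig_exists[OF sym less.prems False] by blast
    have uu: "u \<bullet> u = 1" using nu by (simp add: dot_square_norm)
    define S' where "S' = {x\<in>S. x \<bullet> u = 0}"
    have sub': "subspace S'" using less.prems(1)
      unfolding S'_def subspace_def by (auto simp: inner_add_left)
    have inv': "\<forall>x\<in>S'. A *v x \<in> S'"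
    proof
      fix x assume x: "x \<in> S'"
      have "(A *v x) \<bullet> u = x \<bullet> (A *v u)" by (rule sym_inner[OF sym])
      also have "\<dots> = 0" using x uc by (simp add: S'_def)
      finally show "A *v x \<in> S'" using x less.prems(2) by (simp add: S'_def)
    qed
    have "u \<notin> S'" using uu by (simp add: S'_def)
    hence "S' \<subset> S" using uS unfolding S'_def by blast
    hence "dim S' < dim S" using sub' less.prems(1) by (intro dim_psubset) (simp add: span_eq_iff[THEN iffD2])
    then obtain E' where E': "E' \<subseteq> S'" "span E' = S'" "pairwise orthogonal E'"
      "\<forall>e\<in>E'. norm e = 1 \<and> (\<exists>c. A *v e = c *\<^sub>R e)"
      using less.hyps sub' inv' by blast
    show ?thesis
    proof (intro exI[of _ "insert u E'"] conjI)
      show "insert u E' \<subseteq> S" using uS E'(1) by (auto simp: S'_def)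
      show "span (insert u E') = S"
      proof
        show "span (insert u E') \<subseteq> S" using uS E'(1) less.prems(1)
          by (intro span_minimal) (auto simp: S'_def)
        show "S \<subseteq> span (insert u E')"
        proof
          fix x assume x: "x \<in> S"
          have "x - (x \<bullet> u) *\<^sub>R u \<in> S'" using x uS uu less.prems(1)
            by (simp add: S'_def subspace_diff subspace_scale inner_diff_left)
          hence "x - (x \<bullet> u) *\<^sub>R u \<in> span (insert u E')" using E'(2) span_mono[of E' "insert u E'"] by auto
          moreover have "(x \<bullet> u) *\<^sub>R u \<in> span (insert u E')" by (intro span_mul span_base) simp
          ultimately have "(x - (x \<bullet> u) *\<^sub>R u) + (x \<bullet> u) *\<^sub>R u \<in> span (insert u E')" by (rule span_add)
          thus "x \<in> span (insert u E')" by simp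
        qed
      qed
      show "pairwise orthogonal (insert u E')"
        using E'(1,3) by (auto simp: pairwise_insert S'_def orthogonal_def inner_commute)
      show "\<forall>e\<in>insert u E'. norm e = 1 \<and> (\<exists>c. A *v e = c *\<^sub>R e)" using E'(4) nu uc by auto
    qed
  qed
qed

lemma tr_inner: "((Z::real^'k^'n) *v y) \<bullet> w = y \<bullet> (transpose Z *v w)"
proof -
  have "(Z *v y) \<bullet> w = (y v* transpose Z) \<bullet> w" by simp
  also have "\<dots> = y \<bullet> (transpose Z *v w)" by (rule dot_lmul_matrix)
  finally show ?thesis .
qed

lemma column_mul: "column j ((A::real^'m^'n) ** (B::real^'k^'m)) = A *v column j B"
  by (simp add: column_def matrix_matrix_mult_def matrix_vector_mult_def vec_eq_iff mult.commute)

theorem lemma3p1: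
  fixes Z :: "real^'k^'n" and B :: "real^'k^'k"
  assumes Z01: "\<forall>i g. Z $ i $ g = 0 \<or> Z $ i $ g = 1"
    and Zrow: "\<forall>i. \<exists>!g. Z $ i $ g = 1"
    and Zcol: "\<forall>g. \<exists>i. Z $ i $ g = 1"
    and B01: "\<forall>g h. 0 \<le> B $ g $ h \<and> B $ g $ h \<le> 1"
    and Bsym: "transpose B = B"
    and Brank: "rank B = CARD('k)"
  shows "\<exists>\<mu> :: real^'k^'k.
           (\<forall>j j'. column j (Z ** \<mu>) \<bullet> column j' (Z ** \<mu>) = (if j = j' then 1 else 0))
         \<and> (\<forall>j. \<exists>lam. lam \<noteq> 0 \<and> is_eigenvector (sbm_L Z B) (column j (Z ** \<mu>)) lam)
         \<and> (\<forall>v lam. lam \<noteq> 0 \<and> is_eigenvector (sbm_L Z B) v lam \<longrightarrow>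
                v \<in> span (columns (Z ** \<mu>)))
         \<and> (\<forall>i j. (Z $ i) v* \<mu> = (Z $ j) v* \<mu> \<longleftrightarrow> Z $ i = Z $ j)"
proof -
  define grp where "grp i = (THE g. Z $ i $ g = 1)" for i
  have grp1: "Z $ i $ grp i = 1" for i
    unfolding grp_def using theI'[OF Zrow[rule_format, of i]] .
  have Zent: "Z $ i $ g = (if g = grp i then 1 else 0)" for i g
    using Z01 Zrow grp1 by metis
  have grp_surj: "\<exists>i. grp i = g" for g
    using Zcol Zent by (metis zero_neq_one)
  have Binj: "inj ((*v) B)" using Brank full_rank_injective by blast
  define d where "d g = (\<Sum>l\<in>UNIV. B $ g $ grp l)" for g
  have Went: "sbm_W Z B $ i $ l = B $ grp i $ grp l" for i l
    by (simp add: sbm_W_def matrix_matrix_mult_def transpose_def Zent if_distrib if_distribR cong: if_cong)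
  have Dent: "sbm_D Z B $ i $ i = d (grp i)" for i
    by (simp add: sbm_D_def Went d_def)
  have dpos: "d g > 0" for g
  proof -
    have nn: "\<forall>l\<in>UNIV. 0 \<le> B $ g $ grp l" using B01 by blast
    have "d g \<ge> 0" unfolding d_def using nn by (simp add: sum_nonneg)
    moreover have "d g \<noteq> 0"
    proof
      assume "d g = 0"
      hence z: "\<forall>l\<in>UNIV. B $ g $ grp l = 0" unfolding d_def using sum_nonneg_eq_0_iff[of UNIV "\<lambda>l. B $ g $ grp l"] nn by simp
      have "B $ g $ h = 0" for h using z grp_surj[of h] by auto
      moreover have "B $ h $ g = B $ g $ h" for h
        using arg_cong[OF Bsym, of "\<lambda>M. M $ g $ h"] by (simp add: transpose_def)
      ultimately have "column g B = 0" by (simp add: column_def vec_eq_iff)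
      hence "B *v axis g 1 = B *v 0" by (simp add: matrix_vector_mult_basis)
      hence "axis g (1::real) = 0" using Binj unfolding inj_def by blast
      thus False by (simp add: axis_eq_0_iff)
    qed
    ultimately show ?thesis by simp
  qed
  define \<delta> where "\<delta> g = inverse (sqrt (d g))" for g
  have \<delta>pos: "\<delta> g > 0" for g using dpos[of g] by (simp add: \<delta>_def)
  define \<Delta> :: "real^'k^'k" where "\<Delta> = (\<chi> g h. if g = h then \<delta> g else 0)"
  define P where "P = sbm_D_inv_sqrt Z B"
  have Pent: "P $ i $ j = (if i = j then \<delta> (grp i) else 0)" for i j
    by (simp add: P_def sbm_D_inv_sqrt_def Dent \<delta>_def)
  have PZ: "P ** Z = Z ** \<Delta>"
  proof -
    have a: "(P ** Z) $ i $ g = \<delta> (grp i) * Z $ i $ g" for i g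
    proof -
      have "(P ** Z) $ i $ g = (\<Sum>k\<in>UNIV. (if i = k then \<delta> (grp i) else 0) * Z $ k $ g)"
        unfolding matrix_matrix_mult_def Pent by simp
      also have "\<dots> = (\<Sum>k\<in>UNIV. if i = k then \<delta> (grp i) * Z $ i $ g else 0)"
        by (rule sum.cong) auto
      also have "\<dots> = \<delta> (grp i) * Z $ i $ g" by simp
      finally show ?thesis .
    qed
    have b: "(Z ** \<Delta>) $ i $ g = Z $ i $ g * \<delta> g" for i g
      unfolding matrix_matrix_mult_def \<Delta>_def by (simp add: if_distrib cong: if_cong)
    show ?thesis unfolding vec_eq_iff a b using Zent by (metis mult.commute mult_zero_right)
  qed
  have Ptr: "transpose P = P" by (simp add: vec_eq_iff transpose_def Pent)
  have Dtr: "transpose \<Delta> = \<Delta>" by (simp add: vec_eq_iff transpose_def \<Delta>_def)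
  have ZP: "transpose Z ** P = \<Delta> ** transpose Z"
    using arg_cong[OF PZ, of transpose] by (simp add: matrix_transpose_mul Ptr Dtr)
  define K where "K = \<Delta> ** B ** \<Delta> ** transpose Z"
  have LZK: "sbm_L Z B = Z ** K"
  proof -
    have "sbm_L Z B = P ** (Z ** B ** transpose Z) ** P" unfolding sbm_L_def sbm_W_def P_def ..
    also have "\<dots> = (P ** Z) ** B ** (transpose Z ** P)" by (simp add: matrix_mul_assoc)
    also have "\<dots> = Z ** \<Delta> ** B ** (\<Delta> ** transpose Z)" by (simp only: PZ ZP)
    also have "\<dots> = Z ** K" by (simp add: K_def matrix_mul_assoc)
    finally show ?thesis .
  qed
  have Lsym: "transpose (sbm_L Z B) = sbm_L Z B"
    unfolding LZK K_def by (simp add: matrix_transpose_mul Bsym Dtr matrix_mul_assoc)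
  have Zv: "(Z *v y) $ i = y $ grp i" for y i
  proof -
    have "(Z *v y) $ i = (\<Sum>k\<in>UNIV. Z $ i $ k * y $ k)" by (simp add: matrix_vector_mult_def)
    also have "\<dots> = (\<Sum>k\<in>UNIV. if k = grp i then y $ grp i else 0)"
      by (rule sum.cong) (auto simp: Zent)
    also have "\<dots> = y $ grp i" by simp
    finally show ?thesis .
  qed
  have Zinj: "y = 0" if "Z *v y = 0" for y
  proof -
    have "y $ g = 0" for g using grp_surj[of g] that Zv by (metis zero_index)
    thus ?thesis by (simp add: vec_eq_iff)
  qed
  have Dv: "(\<Delta> *v y) $ g = \<delta> g * y $ g" for y g
  proof -
    have "(\<Delta> *v y) $ g = (\<Sum>k\<in>UNIV. if g = k then \<delta> g * y $ g else 0)"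
      unfolding matrix_vector_mult_def \<Delta>_def vec_lambda_beta by (rule sum.cong) auto
    thus ?thesis by simp
  qed
  have Dinj: "y = 0" if "\<Delta> *v y = 0" for y
  proof -
    have "\<delta> g * y $ g = 0" for g using that Dv by (metis zero_index)
    hence "y $ g = 0" for g using \<delta>pos[of g] by (metis less_irrefl mult_eq_0_iff)
    thus ?thesis by (simp add: vec_eq_iff)
  qed
  have Binj0: "y = 0" if "B *v y = 0" for y
    using Binj that unfolding inj_def by (metis matrix_vector_mult_0_right)
  have Ninj: "y = 0" if "transpose Z *v (Z *v y) = 0" for y
  proof -
    have "(Z *v y) \<bullet> (Z *v y) = 0" using that by (simp add: tr_inner)
    thus ?thesis using Zinj by simp
  qed
  define L where "L = sbm_L Z B"
  have key0: "y = 0" if "L *v (Z *v y) = 0" for y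
  proof -
    have "Z *v (\<Delta> *v (B *v (\<Delta> *v (transpose Z *v (Z *v y))))) = 0"
      using that unfolding L_def LZK K_def by (simp add: matrix_vector_mul_assoc[symmetric])
    thus ?thesis using Zinj Dinj Binj0 Ninj by blast
  qed
  define S where "S = range ((*v) Z)"
  have subS: "subspace S" unfolding S_def
    unfolding subspace_def
  proof (intro conjI ballI allI)
    show "0 \<in> range ((*v) Z)" by (metis matrix_vector_mult_0_right rangeI)
    fix x y assume "x \<in> range ((*v) Z)" "y \<in> range ((*v) Z)"
    then obtain a b where "x = Z *v a" "y = Z *v b" by blast
    thus "x + y \<in> range ((*v) Z)" by (metis matrix_vector_right_distrib rangeI)
  next
    fix c x assume "x \<in> range ((*v) Z)"
    then obtain a where "x = Z *v a" by blast
    thus "c *\<^sub>R x \<in> range ((*v) Z)" by (metis matrix_vector_mult_scaleR rangeI)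
  qed
  have invS: "\<forall>x\<in>S. L *v x \<in> S" and rngL: "\<And>x. L *v x \<in> S"
    unfolding S_def L_def LZK by (auto simp: matrix_vector_mul_assoc[symmetric])
  obtain E where E: "E \<subseteq> S" "span E = S" "pairwise orthogonal E"
     "\<forall>e\<in>E. norm e = 1 \<and> (\<exists>c. L *v e = c *\<^sub>R e)"
    using spectral[OF Lsym[folded L_def] subS invS] by blast
  have indE: "independent E" using E(3,4) by (intro pairwise_orthogonal_independent) auto
  have finE: "finite E" using indE by (rule finiteI_independent)
  have "dim S = CARD('k)"
  proof -
    have "dim S = dim (UNIV :: (real^'k) set)" unfolding S_def
    proof (rule eucl.dim_image_eq)
      show "linear ((*v) Z)" by simp
      show "inj_on ((*v) Z) (span UNIV)" using Zinj
        by (intro inj_onI) (metis matrix_vector_mult_diff_distrib right_minus_eq)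
    qed
    thus ?thesis using vec_dim_card[where 'a=real and 'n='k] by (simp add: dim_vec_eq)
  qed
  hence cardE: "card E = CARD('k)" using E(2) dim_eq_card_independent[OF indE] dim_span[of E] by simp
  obtain e where e: "bij_betw e (UNIV :: 'k set) E"
    using finite_same_card_bij[of "UNIV :: 'k set" E] finE cardE by auto
  have eE: "e j \<in> E" for j using e by (auto simp: bij_betw_def)
  have einj: "e j = e j' \<Longrightarrow> j = j'" for j j' using e by (auto simp: bij_betw_def inj_def)
  define y where "y j = (SOME y. Z *v y = e j)" for j
  have y: "Z *v y j = e j" for j
  proof -
    have "e j \<in> S" using eE E(1) by blast
    then obtain w where "Z *v w = e j" unfolding S_def by (metis imageE)
    thus ?thesis unfolding y_def by (rule someI)
  qed
  define \<mu> :: "real^'k^'k" where "\<mu> = (\<chi> i j. y j $ i)"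
  have colQ: "column j (Z ** \<mu>) = e j" for j
    unfolding column_mul using y by (simp add: \<mu>_def column_def)
  have colsQ: "columns (Z ** \<mu>) = E"
  proof -
    have "columns (Z ** \<mu>) = range e" unfolding columns_def colQ by blast
    thus ?thesis using e by (simp add: bij_betw_def)
  qed
  have c1: "\<forall>j j'. column j (Z ** \<mu>) \<bullet> column j' (Z ** \<mu>) = (if j = j' then 1 else 0)"
  proof (intro allI)
    fix j j'
    show "column j (Z ** \<mu>) \<bullet> column j' (Z ** \<mu>) = (if j = j' then 1 else 0)"
    proof (cases "j = j'")
      case True
      have "norm (e j) = 1" using E(4) eE by blast
      hence "e j \<bullet> e j = 1" by (simp add: dot_square_norm)
      thus ?thesis using True colQ by simp
    next
      case False
      hence "e j \<noteq> e j'" using einj by blast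
      hence "orthogonal (e j) (e j')" using E(3) eE unfolding pairwise_def by blast
      thus ?thesis using False colQ by (simp add: orthogonal_def)
    qed
  qed
  have c2: "\<forall>j. \<exists>lam. lam \<noteq> 0 \<and> is_eigenvector (sbm_L Z B) (column j (Z ** \<mu>)) lam"
  proof
    fix j
    obtain c where c: "L *v e j = c *\<^sub>R e j" using E(4) eE by blast
    have n1: "norm (e j) = 1" using E(4) eE by blast
    hence ne: "e j \<noteq> 0" by auto
    have "c \<noteq> 0"
    proof
      assume "c = 0"
      hence "L *v (Z *v y j) = 0" using c y by simp
      hence "y j = 0" by (rule key0)
      thus False using y[of j] ne by simp
    qed
    thus "\<exists>lam. lam \<noteq> 0 \<and> is_eigenvector (sbm_L Z B) (column j (Z ** \<mu>)) lam"
      using c ne unfolding is_eigenvector_def colQ L_def by blast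
  qed
  have c3: "\<forall>v lam. lam \<noteq> 0 \<and> is_eigenvector (sbm_L Z B) v lam \<longrightarrow> v \<in> span (columns (Z ** \<mu>))"
  proof (intro allI impI)
    fix v lam assume a: "lam \<noteq> 0 \<and> is_eigenvector (sbm_L Z B) v lam"
    hence "L *v v = lam *\<^sub>R v" unfolding is_eigenvector_def L_def by blast
    hence "v = (1/lam) *\<^sub>R (L *v v)" using a by simp
    moreover have "(1/lam) *\<^sub>R (L *v v) \<in> S" using subS rngL by (simp add: subspace_scale)
    ultimately show "v \<in> span (columns (Z ** \<mu>))" using colsQ E(2) by simp
  qed
  define Q where "Q = Z ** \<mu>"
  have QQ: "transpose Q ** Q = mat 1"
    using c1 unfolding Q_def matrix_mult_transpose_dot_column by (simp add: mat_def vec_eq_iff)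
  hence "transpose \<mu> ** (transpose Z ** Q) = mat 1"
    unfolding Q_def by (simp add: matrix_transpose_mul matrix_mul_assoc)
  hence inv\<mu>: "(transpose Z ** Q) ** transpose \<mu> = mat 1" by (simp add: matrix_left_right_inverse)
  have muinj: "w = 0" if "transpose \<mu> *v w = 0" for w
  proof -
    have "w = ((transpose Z ** Q) ** transpose \<mu>) *v w" using inv\<mu> by simp
    also have "\<dots> = 0" using that by (simp add: matrix_vector_mul_assoc[symmetric])
    finally show ?thesis .
  qed
  have c4: "\<forall>i j. (Z $ i) v* \<mu> = (Z $ j) v* \<mu> \<longleftrightarrow> Z $ i = Z $ j"
  proof (intro allI iffI)
    fix i j assume "(Z $ i) v* \<mu> = (Z $ j) v* \<mu>"
    hence "(Z $ i - Z $ j) v* \<mu> = 0" by (simp add: vector_matrix_mult_diff_distrib)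
    hence "transpose \<mu> *v (Z $ i - Z $ j) = 0" by simp
    hence "Z $ i - Z $ j = 0" by (rule muinj)
    thus "Z $ i = Z $ j" by simp
  qed simp
  show ?thesis using c1 c2 c3 c4 by blast
qed

end
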